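(* Let $(x_k)_{k\ge0}$ be an arbitrary sequence of numbers (or indeterminates), define $a_n=x_n$ if $n=2^k-1$ for some integer $k\ge0$ and $a_n=0$ otherwise, and let $d(n)=\det\left(a_{i+j}\right)_{i,j=0}^{n-1}$ with $d(0)=1$. Then $d(0)=1$, $d(1)=x_0$, $d(2)=-x_1^2$, and for all integers $k,n$ with $1<2^{k-1}<n\le 2^k$, $$d(n)=(-1)^n x_{2^k-1}^{2n-2^k}\,d(2^k-n).$$ *)

theory Defs
  imports "Jordan_Normal_Form.Determinant"
begin

definition hseq :: "(nat \<Rightarrow> 'a::comm_ring_1) \<Rightarrow> nat \<Rightarrow> 'a" where
  "hseq x m = (if \<exists>k::nat. m = 2 ^ k - 1 then x m else 0)"

definition hdet :: "(nat \<Rightarrow> 'a::comm_ring_1) \<Rightarrow> nat \<Rightarrow> 'a" where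
  "hdet x n = det (mat n n (\<lambda>(i, j). hseq x (i + j)))"

end

theory Submission
  imports Defs
begin

definition rev_on :: "nat \<Rightarrow> nat \<Rightarrow> nat \<Rightarrow> nat" where
  "rev_on a b = (\<lambda>i. if a \<le> i \<and> i < b then a + b - 1 - i else i)"

lemma rev_on_step: "rev_on a (a + L + 2) = Transposition.transpose a (a + L + 1) \<circ> rev_on (a+1) (a + L + 1)"
  by (rule ext) (auto simp: rev_on_def transpose_def)

lemma rev_on_small: "L \<le> 1 \<Longrightarrow> rev_on a (a + L) = id"
  by (rule ext) (auto simp: rev_on_def)

lemma rev_on_sign: "rev_on a (a + L) permutes {a..<a+L} \<and> sign (rev_on a (a + L)) = (-1) ^ (L div 2)"
proof (induction L arbitrary: a rule: less_induct)
  case (less L)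
  show ?case
  proof (cases "L \<le> 1")
    case True
    then show ?thesis using rev_on_small[OF True] by (simp add: permutes_id[unfolded id_def])
  next
    case False
    then obtain L' where L: "L = L' + 2" using False by (intro that[of "L - 2"]) simp
    have IH: "rev_on (a+1) (a+1+L') permutes {a+1..<a+1+L'} \<and> sign (rev_on (a+1) (a+1+L')) = (-1) ^ (L' div 2)"
      using less.IH[of L' "a+1"] L by simp
    have e: "a + L = a + L' + 2" "a+1+L' = a + L' + 1" using L by auto
    have p1: "rev_on (a+1) (a + L' + 1) permutes {a..<a+L}"
      using IH e by (auto intro: permutes_subset)
    have p2: "Transposition.transpose a (a + L' + 1) permutes {a..<a+L}"
      using L by (intro permutes_swap_id) auto
    have perm: "rev_on a (a + L) permutes {a..<a+L}"
      unfolding e(1) rev_on_step using permutes_compose[OF p1 p2] e by simp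
    have "sign (rev_on a (a + L)) = sign (Transposition.transpose a (a + L' + 1)) * sign (rev_on (a+1) (a + L' + 1))"
      unfolding e(1) rev_on_step
      by (rule sign_compose) (use p1 p2 in \<open>auto intro: permutes_imp_permutation\<close>)
    also have "\<dots> = (-1) ^ (L div 2)" using IH e L by (simp add: sign_swap_id)
    finally show ?thesis using perm by simp
  qed
qed

lemma pow_fact:
  fixes s t k :: nat
  assumes "k \<ge> 1" "s = 2^t - 1" "2^(k-1) \<le> s" "s \<le> 2*2^k - 2"
  shows "s = 2^k - 1"
proof -
  have p: "(1::nat) \<le> 2^t" by simp
  have "(2::nat)^(k-1) < 2^t" using assms(2,3) p by linarith
  then have t1: "k - 1 < t" by (simp add: power_strict_increasing_iff)
  have k2: "(2::nat) \<le> 2^k" using power_increasing[of 1 k "2::nat"] assms(1) by simp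
  have "(2::nat)^t < 2 * 2^k" using assms(2,4) p k2 by linarith
  then have "(2::nat)^t < 2^(Suc k)" by simp
  then have "t < Suc k" using power_strict_increasing_iff[of "2::nat" t "Suc k"] by linarith
  with t1 have "t = k" using assms(1) by linarith
  then show ?thesis using assms(2) by simp
qed


lemma main:
  fixes x :: "nat \<Rightarrow> 'a::comm_ring_1"
  assumes k: "k \<ge> 2" and n1: "2^(k-1) < n" and n2: "n \<le> 2^k"
  shows "hdet x n = (-1)^n * x (2^k-1)^(2*n-2^k) * hdet x (2^k-n)"
proof -
  define K where "K = (2::nat)^k"
  define H where "H = (2::nat)^(k-1)"
  define m where "m = K - n"
  define L where "L = 2 * n - K"
  obtain k' where kk: "k = Suc k'" "k' \<ge> 1" using k by (cases k) auto
  have KH: "K = 2 * H" unfolding K_def H_def kk by simp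
  have Hev: "even H" unfolding H_def kk using kk(2) by simp
  have nH: "H < n" "n \<le> K" using n1 n2 unfolding H_def K_def by auto
  have mL: "m + L = n" "m < H" unfolding m_def L_def using nH KH by auto
  have Ldiv: "L div 2 = n - H" unfolding L_def using KH nH by auto
  define A where "A = mat n n (\<lambda>(i,j). hseq x (i+j))"
  define B where "B = mat m m (\<lambda>(i,j). hseq x (i+j))"
  define r where "r = rev_on m n"
  have rs: "r permutes {m..<n}" "sign r = (-1) ^ (L div 2)"
    using rev_on_sign[of m L] mL unfolding r_def by auto
  have rval: "\<And>i. i \<in> {m..<n} \<Longrightarrow> r i = K - 1 - i"
    unfolding r_def rev_on_def m_def using nH by auto
  have rout: "\<And>i. i \<notin> {m..<n} \<Longrightarrow> r i = i"
    unfolding r_def rev_on_def by auto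
  have rr: "r \<circ> r = id"
  proof
    fix i show "(r \<circ> r) i = id i"
    proof (cases "i \<in> {m..<n}")
      case True
      then have "K - 1 - i \<in> {m..<n}" using m_def nH by auto
      then have "r (K - 1 - i) = K - 1 - (K - 1 - i)" using rval by blast
      also have "\<dots> = i" using True nH by auto
      finally show ?thesis using rval True by auto
    qed (use rout in auto)
  qed
  have rperm: "r permutes {0..<n}" using rs(1) by (auto intro: permutes_subset)
  have hK: "hseq x (K - 1) = x (K - 1)" unfolding hseq_def K_def by auto
  have big: "\<And>s. s \<noteq> K - 1 \<Longrightarrow> H \<le> s \<Longrightarrow> s \<le> 2 * K - 2 \<Longrightarrow> hseq x s = 0"
  proof -
    fix s assume a: "s \<noteq> K - 1" "H \<le> s" "s \<le> 2 * K - 2"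
    show "hseq x s = 0"
    proof (rule ccontr)
      assume "hseq x s \<noteq> 0"
      then obtain t where "s = 2^t - 1" unfolding hseq_def by (auto split: if_splits)
      have "s = 2^k - 1" by (rule pow_fact[OF _ \<open>s = 2^t - 1\<close>]) (use a kk in \<open>auto simp: H_def K_def\<close>)
      then show False using a(1) unfolding K_def by simp
    qed
  qed
  have key: "\<forall>i\<in>{m..<n}. p i = K - 1 - i"
    if pp: "p permutes {0..<n}" and nz: "(\<Prod>i=0..<n. A $$ (i, p i)) \<noteq> 0" for p
  proof -
    have pin: "\<And>i. i < n \<Longrightarrow> p i < n" using permutes_in_image[OF pp] by auto
    have nz2: "\<And>i. i < n \<Longrightarrow> hseq x (i + p i) \<noteq> 0"
    proof
      fix i assume i: "i < n" "hseq x (i + p i) = 0"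
      then have "A $$ (i, p i) = 0" unfolding A_def using pin by auto
      then have "(\<Prod>i=0..<n. A $$ (i, p i)) = 0" using i by (intro prod_zero) auto
      then show False using nz by simp
    qed
    have eq: "\<And>i. i < n \<Longrightarrow> H \<le> i + p i \<Longrightarrow> i + p i = K - 1"
    proof (rule ccontr)
      fix i assume i: "i < n" "H \<le> i + p i" "i + p i \<noteq> K - 1"
      have "i + p i \<le> 2 * K - 2" using i pin[OF i(1)] nH by linarith
      then show False using big[OF i(3,2)] nz2[OF i(1)] by simp
    qed
    have c1: "\<And>i. H \<le> i \<Longrightarrow> i < n \<Longrightarrow> p i = K - 1 - i"
      using eq by fastforce
    have c2: "p i = K - 1 - i" if i: "m \<le> i" "i < H" for i
    proof -
      define j where "j = K - 1 - i"
      have j: "H \<le> j" "j < n" unfolding j_def using i KH m_def nH by auto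
      obtain i' where i': "i' < n" "p i' = j"
      proof -
        have "j \<in> p ` {0..<n}" using permutes_image[OF pp] j(2) by auto
        then show ?thesis using that by auto
      qed
      have "i' < H"
      proof (rule ccontr)
        assume "\<not> i' < H"
        then have "p i' = K - 1 - i'" using c1 i' by auto
        then show False using i' j KH \<open>\<not> i' < H\<close> mL by arith
      qed
      have "i' + j = K - 1" using eq[OF i'(1)] i' j by auto
      then have "i' = i" unfolding j_def using i KH by linarith
      then show ?thesis using i' j_def by simp
    qed
    show ?thesis
    proof
      fix i assume "i \<in> {m..<n}"
      then show "p i = K - 1 - i" using c1 c2 by (cases "i < H") auto
    qed
  qed
  define f where "f p = (signof p * (\<Prod>i=0..<n. A $$ (i, p i)) :: 'a)" for p
  define G where "G = (\<lambda>q. q \<circ> r) ` {q. q permutes {0..<m}}"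
  have GS: "G \<subseteq> {p. p permutes {0..<n}}"
  proof
    fix p assume "p \<in> G"
    then obtain q where q: "q permutes {0..<m}" "p = q \<circ> r" unfolding G_def by auto
    have "q permutes {0..<n}" using q(1) mL by (auto intro: permutes_subset)
    then show "p \<in> {p. p permutes {0..<n}}" using permutes_compose[OF rperm] q by auto
  qed
  have out: "f p = 0" if p: "p \<in> {p. p permutes {0..<n}} - G" for p
  proof (rule ccontr)
    assume "f p \<noteq> 0"
    then have nz: "(\<Prod>i=0..<n. A $$ (i, p i)) \<noteq> 0" unfolding f_def by auto
    have pp: "p permutes {0..<n}" using p by auto
    note kp = key[OF pp nz]
    have "p \<circ> r permutes {0..<n}" using permutes_compose[OF rperm pp] .
    moreover have "\<And>i. i \<in> {0..<n} - {0..<m} \<Longrightarrow> (p \<circ> r) i = i"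
    proof -
      fix i assume i: "i \<in> {0..<n} - {0..<m}"
      then have i2: "i \<in> {m..<n}" by auto
      have "r i \<in> {m..<n}" using permutes_in_image[OF rs(1)] i2 by auto
      then show "(p \<circ> r) i = i" using kp rval[OF i2] i2 nH KH by auto
    qed
    ultimately have "p \<circ> r permutes {0..<m}" by (rule permutes_superset)
    moreover have "p = (p \<circ> r) \<circ> r" using rr by (simp add: o_assoc[symmetric])
    ultimately have "p \<in> G" unfolding G_def by blast
    then show False using p by auto
  qed
  have inj: "inj_on (\<lambda>q. q \<circ> r) {q. q permutes {0..<m}}"
  proof
    fix q q' assume "q \<circ> r = q' \<circ> r"
    then have "q \<circ> r \<circ> r = q' \<circ> r \<circ> r" by simp
    then show "q = q'" using rr by (simp add: o_assoc[symmetric])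
  qed
  have tm: "f (q \<circ> r) = ((-1)^n * x (K-1)^L) * (signof q * (\<Prod>i=0..<m. B $$ (i, q i)))"
    if q: "q permutes {0..<m}" for q
  proof -
    have "sign (q \<circ> r) = sign q * sign r"
      by (rule sign_compose) (use q rs(1) in \<open>auto intro: permutes_imp_permutation\<close>)
    also have "sign r = (-1) ^ n"
    proof -
      have "(-1::int)^n = (-1)^(n-H+H)" using nH by simp
      also have "\<dots> = (-1)^(n-H) * (-1)^H" by (rule power_add)
      also have "\<dots> = (-1)^(n-H)" using Hev by simp
      finally show ?thesis using rs(2) Ldiv by simp
    qed
    finally have sgi: "sign (q \<circ> r) = sign q * (-1)^n" .
    have sg: "(signof (q \<circ> r) :: 'a) = signof q * (-1)^n" unfolding sgi by simp
    have p1: "(\<Prod>i=0..<m. A $$ (i, (q \<circ> r) i)) = (\<Prod>i=0..<m. B $$ (i, q i))"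
    proof (rule prod.cong)
      fix i assume i: "i \<in> {0..<m}"
      have "q i < m" using permutes_in_image[OF q] i by auto
      then show "A $$ (i, (q \<circ> r) i) = B $$ (i, q i)"
        using i rout[of i] mL unfolding A_def B_def by auto
    qed simp
    have p2: "(\<Prod>i=m..<n. A $$ (i, (q \<circ> r) i)) = x (K-1)^L"
    proof -
      have "(\<Prod>i=m..<n. A $$ (i, (q \<circ> r) i)) = (\<Prod>i=m..<n. x (K-1))"
      proof (rule prod.cong)
        fix i assume i: "i \<in> {m..<n}"
        have ri: "r i \<in> {m..<n}" using permutes_in_image[OF rs(1)] i by auto
        then have "q (r i) = r i" using permutes_not_in[OF q] by auto
        then show "A $$ (i, (q \<circ> r) i) = x (K-1)"
          using i ri rval[OF i] hK nH unfolding A_def by auto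
      qed simp
      moreover have "n - m = L" using mL(1) by simp
      ultimately show ?thesis by simp
    qed
    have "(\<Prod>i=0..<n. A $$ (i, (q \<circ> r) i)) = (\<Prod>i=0..<m. A $$ (i, (q \<circ> r) i)) * (\<Prod>i=m..<n. A $$ (i, (q \<circ> r) i))"
      using prod.atLeastLessThan_concat[of 0 m n "\<lambda>i. A $$ (i, (q \<circ> r) i)"] mL by simp
    then show ?thesis unfolding f_def sg p1 p2 by (simp add: ac_simps)
  qed
  have "hdet x n = det A" unfolding hdet_def A_def by simp
  also have "\<dots> = sum f {p. p permutes {0..<n}}" unfolding f_def by (rule det_def') (simp add: A_def)
  also have "\<dots> = sum f G"
    by (rule sum.mono_neutral_right) (use GS out finite_permutations in auto)
  also have "\<dots> = sum (f \<circ> (\<lambda>q. q \<circ> r)) {q. q permutes {0..<m}}"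
    unfolding G_def by (rule sum.reindex[OF inj])
  also have "\<dots> = ((-1)^n * x (K-1)^L) * det B"
  proof -
    have dB: "det B = (\<Sum>p \<in> {p. p permutes {0..<m}}. signof p * (\<Prod>i = 0..<m. B $$ (i, p i)))"
      by (rule det_def') (simp add: B_def)
    show ?thesis unfolding dB sum_distrib_left by (rule sum.cong) (auto simp: tm)
  qed
  also have "det B = hdet x (2^k - n)" unfolding hdet_def B_def m_def K_def by simp
  finally show ?thesis unfolding K_def L_def by simp
qed

theorem theorem4p5:
  fixes x :: "nat \<Rightarrow> 'a::comm_ring_1"
  shows "hdet x 0 = 1 \<and> hdet x 1 = x 0 \<and> hdet x 2 = - (x 1 ^ 2) \<and>
    (\<forall>k n. 1 < (2::nat) ^ (k - 1) \<and> 2 ^ (k - 1) < n \<and> n \<le> 2 ^ k \<longrightarrow>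
       hdet x n = (-1) ^ n * x (2 ^ k - 1) ^ (2 * n - 2 ^ k) * hdet x (2 ^ k - n))"
proof (intro conjI allI impI)
  have h0: "hseq x 0 = x 0" proof -
    have "\<exists>k. (0::nat) = 2^k - 1" by (rule exI[of _ 0]) simp
    then show ?thesis unfolding hseq_def by simp
  qed
  have h1: "hseq x 1 = x 1" proof -
    have "\<exists>k. (1::nat) = 2^k - 1" by (rule exI[of _ 1]) simp
    then show ?thesis unfolding hseq_def by simp
  qed
  have n2: "\<not> (\<exists>k. (2::nat) = 2^k - 1)"
  proof
    assume "\<exists>k. (2::nat) = 2^k - 1"
    then obtain k where "(2::nat) = 2^k - 1" by blast
    moreover have "(1::nat) \<le> 2^k" by simp
    ultimately have e: "(2::nat)^k = 3" by linarith
    show False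
    proof (cases k)
      case 0 then show False using e by simp
    next
      case (Suc k') then have "2 * (2::nat)^k' = 3" using e by simp
      then show False by presburger
    qed
  qed
  have h2: "hseq x 2 = 0" unfolding hseq_def using n2 by auto
  show "hdet x 0 = 1" unfolding hdet_def by (rule det_dim_zero) auto
  show "hdet x 1 = x 0" unfolding hdet_def by (subst det_single) (auto simp: h0)
  define A where "A = mat 2 2 (\<lambda>(i, j). hseq x (i + j))"
  have A2: "A \<in> carrier_mat 2 2" unfolding A_def by simp
  have "det A = - det (swaprows 0 1 A)" using det_swaprows[OF _ _ _ A2, of 0 1] by simp
  also have "det (swaprows 0 1 A) = prod_list (diag_mat (swaprows 0 1 A))"
  proof (rule det_lower_triangular[of 2])
    fix i j :: nat assume "i < j" "j < 2"
    then have "i = 0" "j = 1" by auto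
    have h2': "hseq x (Suc (Suc 0)) = 0" using h2 by (simp add: numeral_2_eq_2)
    then show "swaprows 0 1 A $$ (i, j) = 0" using A2 \<open>i = 0\<close> \<open>j = 1\<close> by (simp add: A_def)
  qed (use A2 in simp)
  also have "\<dots> = x 1 * x 1" using A2 h1 by (simp add: diag_mat_def A_def upt_rec)
  finally show "hdet x 2 = - (x 1 ^ 2)" unfolding hdet_def A_def[symmetric] by (simp add: power2_eq_square)
next
  fix k n :: nat
  assume a: "1 < (2::nat) ^ (k - 1) \<and> 2 ^ (k - 1) < n \<and> n \<le> 2 ^ k"
  have "k \<ge> 2"
  proof (rule ccontr)
    assume "\<not> 2 \<le> k"
    then have "k - 1 = 0" by simp
    then show False using a by simp
  qed
  then show "hdet x n = (-1) ^ n * x (2 ^ k - 1) ^ (2 * n - 2 ^ k) * hdet x (2 ^ k - n)"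
    using main[of k n x] a by blast
qed

end
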